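(* Let $D$ be a Newton diagram in $2$ variables whose support $K$ contains all $(a,b)\in\mathbb N_0^2$ with $a+b<k$ and at least one point $(a,b)$ with $a+b=k$. Then there exists a Newton diagram $\tilde D$ with support $\tilde K$ such that $K\subset\tilde K$, $\tilde D|_K=D|_K$, $\tilde K$ contains all $(a,b)\in\mathbb N_0^2$ with $a+b=k$, every point of $\tilde K\setminus K$ satisfies $a+b=k$, and $SC(\tilde D)\le SC(D)$.
   Context: For $m\in\mathbb Z^n$ write $|m|=m_1+\dots+m_n$; $e_1,\dots,e_n$ is the standard basis. A Newton diagram in $n$ variables is a function $D\colon\mathbb Z^n\to\{0,P,N\}$ ($P,N$ formal symbols) whose support $K=D^{-1}(\{P,N\})$ is a finite nonempty subset of $\mathbb N_0^n$. For $a\in\mathbb Z^n$ let $E(a)=\{a,a-e_1,\dots,a-e_n\}$; $E(a)$ is a node of $D$ if the image $D(E(a))$ equals $\{P\}$, $\{N\}$, $\{0,P\}$ or $\{0,N\}$. For $n=2$: a node $E(a)$ is an interior node if no point of $E(a)$ has $D$-value $0$, an edge node if exactly one does, a vertex node if exactly two do; a vertex node is a bottom node if its two $0$-points are $a-e_1$ and $a-e_2$. The weighted surface count is $SC(D)=(\#\text{interior nodes})+\tfrac12\big((\#\text{edge nodes})+(\#\text{vertex nodes})-(\#\text{bottom nodes})\big)$. *)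

theory Defs
  imports Complex_Main
begin

datatype dval = Z | P | N

type_synonym diagram = "int \<times> int \<Rightarrow> dval"

definition supp :: "diagram \<Rightarrow> (int \<times> int) set" where
  "supp D = {m. D m \<noteq> Z}"

definition newton_diagram :: "diagram \<Rightarrow> bool" where
  "newton_diagram D \<longleftrightarrow> finite (supp D) \<and> supp D \<noteq> {} \<and>
     (\<forall>(x,y)\<in>supp D. x \<ge> 0 \<and> y \<ge> 0)"

definition Eset :: "int \<times> int \<Rightarrow> (int \<times> int) set" where
  "Eset a = {a, (fst a - 1, snd a), (fst a, snd a - 1)}"

definition is_node :: "diagram \<Rightarrow> int \<times> int \<Rightarrow> bool" where
  "is_node D a \<longleftrightarrow> D ` Eset a \<in> {{P}, {N}, {Z, P}, {Z, N}}"

definition zero_pts :: "diagram \<Rightarrow> int \<times> int \<Rightarrow> (int \<times> int) set" where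
  "zero_pts D a = {m \<in> Eset a. D m = Z}"

definition interior_nodes :: "diagram \<Rightarrow> (int \<times> int) set" where
  "interior_nodes D = {a. is_node D a \<and> card (zero_pts D a) = 0}"

definition edge_nodes :: "diagram \<Rightarrow> (int \<times> int) set" where
  "edge_nodes D = {a. is_node D a \<and> card (zero_pts D a) = 1}"

definition vertex_nodes :: "diagram \<Rightarrow> (int \<times> int) set" where
  "vertex_nodes D = {a. is_node D a \<and> card (zero_pts D a) = 2}"

definition bottom_nodes :: "diagram \<Rightarrow> (int \<times> int) set" where
  "bottom_nodes D = {a. a \<in> vertex_nodes D \<and>
      zero_pts D a = {(fst a - 1, snd a), (fst a, snd a - 1)}}"

definition SC :: "diagram \<Rightarrow> real" where
  "SC D = real (card (interior_nodes D)) +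
     (real (card (edge_nodes D)) + real (card (vertex_nodes D))
      - real (card (bottom_nodes D))) / 2"

end

theory Submission imports Defs begin

definition nd :: "dval \<Rightarrow> dval \<Rightarrow> dval \<Rightarrow> bool" where
  "nd x y z = ((x \<noteq> N \<and> y \<noteq> N \<and> z \<noteq> N \<and> (x = P \<or> y = P \<or> z = P)) \<or>
               (x \<noteq> P \<and> y \<noteq> P \<and> z \<noteq> P \<and> (x = N \<or> y = N \<or> z = N)))"

definition nz :: "dval \<Rightarrow> int" where "nz v = (if v = Z then 1 else 0)"

definition w :: "dval \<Rightarrow> dval \<Rightarrow> dval \<Rightarrow> int" where
  "w x y z = (if nd x y z then (if nz x + nz y + nz z = 0 then 2 else if nz x + nz y + nz z = 1 then 1
              else if x \<noteq> Z then 0 else 1) else 0)"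

definition w3 :: "diagram \<Rightarrow> int \<times> int \<Rightarrow> int" where
  "w3 D a = w (D a) (D (fst a - 1, snd a)) (D (fst a, snd a - 1))"

lemma node_iff: "is_node D a \<longleftrightarrow> nd (D a) (D (fst a - 1, snd a)) (D (fst a, snd a - 1))"
  unfolding is_node_def Eset_def nd_def
  by (cases "D a"; cases "D (fst a - 1, snd a)"; cases "D (fst a, snd a - 1)") (auto simp: insert_commute)

lemma filter_insert': "{m \<in> insert x A. Q m} = (if Q x then insert x {m \<in> A. Q m} else {m \<in> A. Q m})"
  by auto

lemma zp: "zero_pts D (x,y) = (if D (x,y) = Z then {(x,y)} else {}) \<union> (if D (x-1,y) = Z then {(x-1,y)} else {}) \<union> (if D (x,y-1) = Z then {(x,y-1)} else {})"
  unfolding zero_pts_def Eset_def by auto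

lemma card_zero: "int (card (zero_pts D a)) = nz (D a) + nz (D (fst a - 1, snd a)) + nz (D (fst a, snd a - 1))"
proof -
  obtain x y where a: "a = (x,y)" by (cases a)
  show ?thesis unfolding a zp nz_def
    by (cases "D (x,y) = Z"; cases "D (x-1,y) = Z"; cases "D (x,y-1) = Z") auto
qed

lemma zp_bot: "zero_pts D (x,y) = {(x-1,y),(x,y-1)} \<longleftrightarrow> D (x,y) \<noteq> Z \<and> D (x-1,y) = Z \<and> D (x,y-1) = Z"
proof
  assume h: "zero_pts D (x,y) = {(x-1,y),(x,y-1)}"
  have "(x-1,y) \<in> zero_pts D (x,y)" "(x,y-1) \<in> zero_pts D (x,y)" "(x,y) \<notin> zero_pts D (x,y)"
    using h by auto
  then show "D (x,y) \<noteq> Z \<and> D (x-1,y) = Z \<and> D (x,y-1) = Z"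
    unfolding zero_pts_def Eset_def by auto
next
  assume "D (x,y) \<noteq> Z \<and> D (x-1,y) = Z \<and> D (x,y-1) = Z"
  then show "zero_pts D (x,y) = {(x-1,y),(x,y-1)}" unfolding zp by auto
qed

lemma bottom_iff: "a \<in> bottom_nodes D \<longleftrightarrow> a \<in> vertex_nodes D \<and> D a \<noteq> Z \<and> D (fst a - 1, snd a) = Z \<and> D (fst a, snd a - 1) = Z"
  by (cases a) (simp add: bottom_nodes_def zp_bot)

lemma w3_eq: "w3 D a = 2 * of_bool (a \<in> interior_nodes D) + of_bool (a \<in> edge_nodes D)
   + of_bool (a \<in> vertex_nodes D) - of_bool (a \<in> bottom_nodes D)"
proof -
  have c: "int (card (zero_pts D a)) = nz (D a) + nz (D (fst a - 1, snd a)) + nz (D (fst a, snd a - 1))"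
    by (rule card_zero)
  show ?thesis
    unfolding bottom_iff interior_nodes_def edge_nodes_def vertex_nodes_def w3_def node_iff
    using c
    by (cases "D a"; cases "D (fst a - 1, snd a)"; cases "D (fst a, snd a - 1)") (auto simp: w_def nd_def nz_def)
qed

lemma wF2_int: "L1 \<noteq> Z \<Longrightarrow> L2 \<noteq> Z \<Longrightarrow> w P L1 L2 + w N L1 L2 \<le> 2 * w Z L1 L2"
  by (cases L1; cases L2) (auto simp: w_def nd_def nz_def)
lemma wF2_e1: "L \<noteq> Z \<Longrightarrow> w P Z L + w N Z L \<le> 2 * w Z Z L - 1"
  by (cases L) (auto simp: w_def nd_def nz_def)
lemma wF2_e2: "L \<noteq> Z \<Longrightarrow> w P L Z + w N L Z \<le> 2 * w Z L Z - 1"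
  by (cases L) (auto simp: w_def nd_def nz_def)
lemma wX2: "r \<noteq> Z \<Longrightarrow> w U r P + w U r N \<le> 2 * w U r Z"
  by (cases r; cases U) (auto simp: w_def nd_def nz_def)
lemma wX4: "r \<noteq> Z \<Longrightarrow> w U P r + w U N r \<le> 2 * w U Z r"
  by (cases r; cases U) (auto simp: w_def nd_def nz_def)
lemma wX5: "w U P Z + w U N Z \<le> 2 * w U Z Z + 2"
  by (cases U) (auto simp: w_def nd_def nz_def)
lemma wX0: "w U Z P + w U Z N \<le> 2 * w U Z Z + 2"
  by (cases U) (auto simp: w_def nd_def nz_def)
lemma wX3: "w U P N = w U Z Z" "w U N P = w U Z Z"
  by (cases U; auto simp: w_def nd_def nz_def)+

definition cand :: "(int \<times> int) set \<Rightarrow> (int \<times> int) set" where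
  "cand S = S \<union> (\<lambda>m. (fst m + 1, snd m)) ` S \<union> (\<lambda>m. (fst m, snd m + 1)) ` S"

lemma finite_cand: "finite S \<Longrightarrow> finite (cand S)"
  unfolding cand_def by auto

lemma cand_mono: "S \<subseteq> T \<Longrightarrow> cand S \<subseteq> cand T"
  unfolding cand_def by auto

lemma nodes_cand: "{a. is_node D a} \<subseteq> cand (supp D)"
proof
  fix a assume "a \<in> {a. is_node D a}"
  then have "nd (D a) (D (fst a - 1, snd a)) (D (fst a, snd a - 1))" by (simp add: node_iff)
  then have "D a \<noteq> Z \<or> D (fst a - 1, snd a) \<noteq> Z \<or> D (fst a, snd a - 1) \<noteq> Z"
    unfolding nd_def by auto
  moreover have "a = (\<lambda>m. (fst m + 1, snd m)) (fst a - 1, snd a)" by simp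
  moreover have "a = (\<lambda>m. (fst m, snd m + 1)) (fst a, snd a - 1)" by simp
  ultimately show "a \<in> cand (supp D)"
    unfolding cand_def supp_def by (smt (verit) UnI1 UnI2 image_eqI mem_Collect_eq)
qed

lemma card_sum: "finite F \<Longrightarrow> A \<subseteq> F \<Longrightarrow> real (card A) = (\<Sum>a\<in>F. (of_bool (a \<in> A) :: real))"
proof -
  assume f: "finite F" and s: "A \<subseteq> F"
  have "(\<Sum>a\<in>F. (of_bool (a \<in> A) :: real)) = (\<Sum>a\<in>F. if a \<in> A then 1 else 0)" by (simp add: of_bool_def)
  also have "\<dots> = (\<Sum>a\<in>A. 1)" using f s by (simp add: sum.If_cases Int_absorb1)
  finally show ?thesis by simp
qed

lemma SC_sum:
  assumes f: "finite F" and s: "{a. is_node D a} \<subseteq> F"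
  shows "2 * SC D = (\<Sum>a\<in>F. real_of_int (w3 D a))"
proof -
  have sI: "interior_nodes D \<subseteq> F" "edge_nodes D \<subseteq> F" "vertex_nodes D \<subseteq> F" "bottom_nodes D \<subseteq> F"
    using s unfolding interior_nodes_def edge_nodes_def vertex_nodes_def bottom_nodes_def by auto
  have "(\<Sum>a\<in>F. real_of_int (w3 D a)) = 2 * (\<Sum>a\<in>F. (of_bool (a \<in> interior_nodes D) :: real))
      + (\<Sum>a\<in>F. (of_bool (a \<in> edge_nodes D) :: real)) + (\<Sum>a\<in>F. (of_bool (a \<in> vertex_nodes D) :: real))
      - (\<Sum>a\<in>F. (of_bool (a \<in> bottom_nodes D) :: real))"
    by (simp add: w3_eq sum.distrib sum_subtractf sum_distrib_left)
  also have "\<dots> = 2 * SC D"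
    unfolding SC_def using card_sum[OF f sI(1)] card_sum[OF f sI(2)] card_sum[OF f sI(3)] card_sum[OF f sI(4)]
    by simp
  finally show ?thesis by simp
qed

definition eff :: "diagram \<Rightarrow> int \<Rightarrow> (int \<Rightarrow> dval) \<Rightarrow> int \<Rightarrow> dval" where
  "eff D k s a = (if 0 \<le> a \<and> a \<le> k \<and> D (a, k - a) = Z then s a else D (a, k - a))"

definition Dm :: "diagram \<Rightarrow> int \<Rightarrow> (int \<Rightarrow> dval) \<Rightarrow> diagram" where
  "Dm D k s m = (if fst m + snd m = k \<and> 0 \<le> fst m \<and> fst m \<le> k \<and> D m = Z then s (fst m) else D m)"

definition dterm :: "diagram \<Rightarrow> int \<Rightarrow> (int \<Rightarrow> dval) \<Rightarrow> int \<Rightarrow> int" where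
  "dterm D k s a = w (eff D k s a) (D (a - 1, k - a)) (D (a, k - a - 1)) - w (D (a, k - a)) (D (a - 1, k - a)) (D (a, k - a - 1))"

definition xterm :: "diagram \<Rightarrow> int \<Rightarrow> (int \<Rightarrow> dval) \<Rightarrow> int \<Rightarrow> int" where
  "xterm D k s a = w (D (a, k + 1 - a)) (eff D k s (a - 1)) (eff D k s a) - w (D (a, k + 1 - a)) (D (a - 1, k - (a - 1))) (D (a, k - a))"

definition W :: "diagram \<Rightarrow> int \<Rightarrow> (int \<Rightarrow> dval) \<Rightarrow> int \<Rightarrow> int" where
  "W D k s n = (\<Sum>a\<in>{0..n}. dterm D k s a + xterm D k s a)"

definition bnd :: "diagram \<Rightarrow> int \<Rightarrow> int \<Rightarrow> int" where
  "bnd D k n = (if \<exists>m. 0 \<le> m \<and> m < n \<and> D (m, k - m) \<noteq> Z then 0 else 1)"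

lemma dterm_rel: "w3 (Dm D k s) (a, k - a) - w3 D (a, k - a) = dterm D k s a"
  unfolding w3_def dterm_def Dm_def eff_def by simp

lemma xterm_rel: "w3 (Dm D k s) (a, k + 1 - a) - w3 D (a, k + 1 - a) = xterm D k s a"
  unfolding w3_def xterm_def Dm_def eff_def by (simp add: algebra_simps)

lemma W_upd: "n < m \<Longrightarrow> W D k (s(m := \<sigma>)) n = W D k s n"
  unfolding W_def dterm_def xterm_def eff_def by (intro sum.cong) auto

lemma W_step: "0 \<le> n \<Longrightarrow> W D k s (n + 1) = W D k s n + dterm D k s (n + 1) + xterm D k s (n + 1)"
proof -
  assume "0 \<le> n"
  then have "{0..n+1} = insert (n+1) {0..n}" by auto
  then show ?thesis unfolding W_def by simp
qed

lemma W_0: "W D k s 0 = dterm D k s 0 + xterm D k s 0"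
  unfolding W_def by simp

lemma Dm_eq: "\<not> (fst m + snd m = k \<and> 0 \<le> fst m \<and> fst m \<le> k) \<Longrightarrow> Dm D k s m = D m"
  unfolding Dm_def by auto

lemma outside:
  assumes "b \<notin> (\<lambda>a. (a, k - a)) ` {0..k} \<union> (\<lambda>a. (a, k + 1 - a)) ` {0..k+1}"
  shows "w3 (Dm D k s) b = w3 D b"
proof -
  obtain x y where b: "b = (x, y)" by (cases b)
  have c1: "\<not> (x + y = k \<and> 0 \<le> x \<and> x \<le> k)"
  proof
    assume h: "x + y = k \<and> 0 \<le> x \<and> x \<le> k"
    then have "b = (\<lambda>a. (a, k - a)) x" "x \<in> {0..k}" using b by auto
    then show False using assms by blast
  qed
  have c2: "\<not> ((x - 1) + y = k \<and> 0 \<le> x - 1 \<and> x - 1 \<le> k)"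
  proof
    assume h: "(x - 1) + y = k \<and> 0 \<le> x - 1 \<and> x - 1 \<le> k"
    then have "b = (\<lambda>a. (a, k + 1 - a)) x" "x \<in> {0..k+1}" using b by auto
    then show False using assms by blast
  qed
  have c3: "\<not> (x + (y - 1) = k \<and> 0 \<le> x \<and> x \<le> k)"
  proof
    assume h: "x + (y - 1) = k \<and> 0 \<le> x \<and> x \<le> k"
    then have "b = (\<lambda>a. (a, k + 1 - a)) x" "x \<in> {0..k+1}" using b by auto
    then show False using assms by blast
  qed
  show ?thesis unfolding b w3_def using Dm_eq[of "(x,y)" k D s] Dm_eq[of "(x-1,y)" k D s] Dm_eq[of "(x,y-1)" k D s] c1 c2 c3
    by simp
qed

lemma supp_Dm: "supp (Dm D k s) \<subseteq> supp D \<union> (\<lambda>a. (a, k - a)) ` {0..k}"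
proof
  fix m assume "m \<in> supp (Dm D k s)"
  then have "Dm D k s m \<noteq> Z" unfolding supp_def by simp
  then have "D m \<noteq> Z \<or> (fst m + snd m = k \<and> 0 \<le> fst m \<and> fst m \<le> k)" unfolding Dm_def by (auto split: if_splits)
  then show "m \<in> supp D \<union> (\<lambda>a. (a, k - a)) ` {0..k}"
  proof
    assume "D m \<noteq> Z" then show ?thesis unfolding supp_def by auto
  next
    assume h: "fst m + snd m = k \<and> 0 \<le> fst m \<and> fst m \<le> k"
    then have "m = (\<lambda>a. (a, k - a)) (fst m)" "fst m \<in> {0..k}" by (cases m; auto)+
    then show ?thesis by blast
  qed
qed

lemma Dm_keep: "D m \<noteq> Z \<Longrightarrow> Dm D k s m = D m"
  unfolding Dm_def by auto

context
  fixes D :: diagram and k :: int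
  assumes nwt: "newton_diagram D"
    and h2: "\<forall>a b. a \<ge> 0 \<and> b \<ge> 0 \<and> a + b < k \<longrightarrow> (a, b) \<in> supp D"
    and k1: "k \<ge> 1"
begin

lemma negZ1: "x < 0 \<Longrightarrow> D (x, y) = Z"
  using nwt unfolding newton_diagram_def supp_def by fastforce
lemma negZ2: "y < 0 \<Longrightarrow> D (x, y) = Z"
  using nwt unfolding newton_diagram_def supp_def by fastforce
lemma belowNZ: "0 \<le> x \<Longrightarrow> 0 \<le> y \<Longrightarrow> x + y < k \<Longrightarrow> D (x, y) \<noteq> Z"
  using h2 unfolding supp_def by auto

lemma dsum:
  assumes "0 \<le> a" "a \<le> k" "D (a, k - a) = Z" "s1 a = P" "s2 a = N"
  shows "dterm D k s1 a + dterm D k s2 a \<le> (if a = k \<or> a = 0 then -1 else 0)"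
proof -
  have e: "eff D k s1 a = P" "eff D k s2 a = N" using assms unfolding eff_def by auto
  consider "a = 0" | "0 < a \<and> a < k" | "a = k" using assms by linarith
  then show ?thesis
  proof cases
    case 1
    have "D (a - 1, k - a) = Z" using 1 by (simp add: negZ1)
    moreover have "D (a, k - a - 1) \<noteq> Z" using 1 k1 by (intro belowNZ) auto
    ultimately show ?thesis using wF2_e1[of "D (a, k - a - 1)"] e assms(3) 1 k1
      unfolding dterm_def by simp
  next
    case 2
    have "D (a - 1, k - a) \<noteq> Z" using 2 by (intro belowNZ) auto
    moreover have "D (a, k - a - 1) \<noteq> Z" using 2 by (intro belowNZ) auto
    ultimately show ?thesis using wF2_int[of "D (a - 1, k - a)" "D (a, k - a - 1)"] e assms(3) 2
      unfolding dterm_def by simp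
  next
    case 3
    have "D (a, k - a - 1) = Z" using 3 by (simp add: negZ2)
    moreover have "D (a - 1, k - a) \<noteq> Z" using 3 k1 by (intro belowNZ) auto
    ultimately show ?thesis using wF2_e2[of "D (a - 1, k - a)"] e assms(3) 3
      unfolding dterm_def by simp
  qed
qed

lemma dsum':
  assumes "0 < a" "a \<le> k" "D (a, k - a) = Z" "s1 a = P" "s2 a = N"
  shows "dterm D k s1 a + dterm D k s2 a \<le> (if a = k then -1 else 0)"
  using dsum[of a s1 s2] assms by simp

lemma dzero: "D (a, k - a) \<noteq> Z \<Longrightarrow> dterm D k s a = 0"
  unfolding dterm_def eff_def by simp

lemma L_EE:
  assumes "0 \<le> n" "n + 1 \<le> k" "D (n, k - n) \<noteq> Z" "D (n + 1, k - (n + 1)) \<noteq> Z"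
  shows "W D k s (n + 1) = W D k s n"
  using assms unfolding W_step[OF assms(1)] dterm_def xterm_def eff_def by simp

lemma L_ME:
  assumes "0 \<le> n" "n + 1 \<le> k" "D (n, k - n) = Z" "D (n + 1, k - (n + 1)) \<noteq> Z" "s1 n = P" "s2 n = N"
  shows "W D k s1 (n + 1) + W D k s2 (n + 1) \<le> W D k s1 n + W D k s2 n"
proof -
  have x: "xterm D k s1 (n+1) + xterm D k s2 (n+1) \<le> 0"
    using assms wX4[of "D (n + 1, k - (n + 1))" "D (n + 1, k + 1 - (n + 1))"]
    unfolding xterm_def eff_def by simp
  show ?thesis using x dzero[OF assms(4)] unfolding W_step[OF assms(1)] by simp
qed

lemma L_EM:
  assumes "0 \<le> n" "n + 1 \<le> k" "D (n, k - n) \<noteq> Z" "D (n + 1, k - (n + 1)) = Z"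
  shows "W D k (s(n+1 := P)) (n + 1) + W D k (s(n+1 := N)) (n + 1) \<le> 2 * W D k s n - (if n + 1 = k then 1 else 0)"
proof -
  have d: "dterm D k (s(n+1 := P)) (n+1) + dterm D k (s(n+1 := N)) (n+1) \<le> (if n + 1 = k then -1 else 0)"
    using assms by (intro dsum') auto
  have x: "xterm D k (s(n+1 := P)) (n+1) + xterm D k (s(n+1 := N)) (n+1) \<le> 0"
    using assms wX2[of "D (n, k - n)" "D (n + 1, k + 1 - (n + 1))"]
    unfolding xterm_def eff_def by simp
  have e: "W D k (s(n+1 := P)) (n + 1) = W D k s n + dterm D k (s(n+1 := P)) (n+1) + xterm D k (s(n+1 := P)) (n+1)"
     "W D k (s(n+1 := N)) (n + 1) = W D k s n + dterm D k (s(n+1 := N)) (n+1) + xterm D k (s(n+1 := N)) (n+1)"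
    using W_upd[of n "n+1" D k s] unfolding W_step[OF assms(1)] by simp_all
  show ?thesis using d x e by (smt (verit))
qed

lemma L_MM:
  assumes "0 \<le> n" "n + 1 \<le> k" "D (n, k - n) = Z" "D (n + 1, k - (n + 1)) = Z" "s1 n = P" "s2 n = N"
  shows "W D k (s2(n+1 := P)) (n + 1) + W D k (s1(n+1 := N)) (n + 1) \<le> W D k s1 n + W D k s2 n - (if n + 1 = k then 1 else 0)"
proof -
  have d: "dterm D k (s2(n+1 := P)) (n+1) + dterm D k (s1(n+1 := N)) (n+1) \<le> (if n + 1 = k then -1 else 0)"
    using assms by (intro dsum') auto
  have x: "xterm D k (s2(n+1 := P)) (n+1) = 0" "xterm D k (s1(n+1 := N)) (n+1) = 0"
    using assms wX3[of "D (n + 1, k + 1 - (n + 1))"]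
    unfolding xterm_def eff_def by simp_all
  have e: "W D k (s2(n+1 := P)) (n + 1) = W D k s2 n + dterm D k (s2(n+1 := P)) (n+1) + xterm D k (s2(n+1 := P)) (n+1)"
     "W D k (s1(n+1 := N)) (n + 1) = W D k s1 n + dterm D k (s1(n+1 := N)) (n+1) + xterm D k (s1(n+1 := N)) (n+1)"
    using W_upd[of n "n+1" D k s1] W_upd[of n "n+1" D k s2] unfolding W_step[OF assms(1)] by simp_all
  show ?thesis using d x e by (smt (verit))
qed

lemma B_E: "D (0, k) \<noteq> Z \<Longrightarrow> W D k s 0 = 0"
  unfolding W_0 dterm_def xterm_def eff_def by simp

lemma B_M:
  assumes "D (0, k) = Z" "s1 0 = P" "s2 0 = N"
  shows "W D k s1 0 + W D k s2 0 \<le> 1"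
proof -
  have d: "dterm D k s1 0 + dterm D k s2 0 \<le> -1"
    using dsum[of 0 s1 s2] assms k1 by simp
  have z: "D (-1, k + 1) = Z" by (simp add: negZ1)
  have x: "xterm D k s1 0 + xterm D k s2 0 \<le> 2"
    using assms z k1 wX0[of "D (0, k + 1)"] unfolding xterm_def eff_def by simp
  show ?thesis using d x unfolding W_0 by simp
qed

lemma F_E: "D (k, 0) \<noteq> Z \<Longrightarrow> xterm D k s (k + 1) = 0"
  unfolding xterm_def eff_def by simp

lemma F_M:
  assumes "D (k, 0) = Z" "s1 k = P" "s2 k = N"
  shows "xterm D k s1 (k + 1) + xterm D k s2 (k + 1) \<le> 2"
proof -
  have z: "D (k + 1, -1) = Z" by (simp add: negZ2)
  show ?thesis
    using assms z k1 wX5[of "D (k + 1, 0)"] unfolding xterm_def eff_def by simp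
qed

lemma dp: "int i \<le> k \<Longrightarrow>
  (D (int i, k - int i) \<noteq> Z \<longrightarrow> (\<exists>s. (\<forall>a. s a \<noteq> Z) \<and> W D k s (int i) \<le> 0)) \<and>
  (D (int i, k - int i) = Z \<longrightarrow> (\<exists>s1 s2. (\<forall>a. s1 a \<noteq> Z) \<and> (\<forall>a. s2 a \<noteq> Z) \<and> s1 (int i) = P \<and> s2 (int i) = N \<and>
       W D k s1 (int i) + W D k s2 (int i) \<le> bnd D k (int i) - (if int i = k then 1 else 0)))"
proof (induction i)
  case 0
  show ?case
  proof (intro conjI impI)
    assume "D (int 0, k - int 0) \<noteq> Z"
    then show "\<exists>s. (\<forall>a. s a \<noteq> Z) \<and> W D k s (int 0) \<le> 0" using B_E by (intro exI[of _ "\<lambda>_. P"]) auto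
  next
    assume a: "D (int 0, k - int 0) = Z"
    have "bnd D k 0 = 1" unfolding bnd_def by auto
    then show "\<exists>s1 s2. (\<forall>a. s1 a \<noteq> Z) \<and> (\<forall>a. s2 a \<noteq> Z) \<and> s1 (int 0) = P \<and> s2 (int 0) = N \<and>
       W D k s1 (int 0) + W D k s2 (int 0) \<le> bnd D k (int 0) - (if int 0 = k then 1 else 0)"
      using B_M[of "\<lambda>_. P" "\<lambda>_. N"] k1 a by (intro exI[of _ "\<lambda>_. P"] exI[of _ "\<lambda>_. N"]) auto
  qed
next
  case (Suc i)
  define n where "n = int i"
  have nS: "int (Suc i) = n + 1" unfolding n_def by simp
  have n0: "0 \<le> n" unfolding n_def by simp
  have nk: "n + 1 \<le> k" using Suc.prems nS by simp
  have IH: "(D (n, k - n) \<noteq> Z \<longrightarrow> (\<exists>s. (\<forall>a. s a \<noteq> Z) \<and> W D k s n \<le> 0)) \<and>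
    (D (n, k - n) = Z \<longrightarrow> (\<exists>s1 s2. (\<forall>a. s1 a \<noteq> Z) \<and> (\<forall>a. s2 a \<noteq> Z) \<and> s1 n = P \<and> s2 n = N \<and>
       W D k s1 n + W D k s2 n \<le> bnd D k n - (if n = k then 1 else 0)))"
    using Suc.IH Suc.prems unfolding n_def by simp
  have bnd1: "bnd D k n \<le> 1" unfolding bnd_def by simp
  show ?case unfolding nS
  proof (cases "D (n, k - n) = Z")
    case M: True
    then obtain s1 s2 where s: "\<forall>a. s1 a \<noteq> Z" "\<forall>a. s2 a \<noteq> Z" "s1 n = P" "s2 n = N"
       "W D k s1 n + W D k s2 n \<le> bnd D k n - (if n = k then 1 else 0)" using IH by blast
    have s': "W D k s1 n + W D k s2 n \<le> bnd D k n" using s(5) nk by simp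
    show "(D (n + 1, k - (n + 1)) \<noteq> Z \<longrightarrow> (\<exists>s. (\<forall>a. s a \<noteq> Z) \<and> W D k s (n + 1) \<le> 0)) \<and>
      (D (n + 1, k - (n + 1)) = Z \<longrightarrow> (\<exists>s1 s2. (\<forall>a. s1 a \<noteq> Z) \<and> (\<forall>a. s2 a \<noteq> Z) \<and> s1 (n + 1) = P \<and> s2 (n + 1) = N \<and>
       W D k s1 (n + 1) + W D k s2 (n + 1) \<le> bnd D k (n + 1) - (if n + 1 = k then 1 else 0)))"
    proof (intro conjI impI)
      assume E: "D (n + 1, k - (n + 1)) \<noteq> Z"
      have "W D k s1 (n + 1) + W D k s2 (n + 1) \<le> 1"
        using L_ME[of n s1 s2, OF n0 nk M E s(3) s(4)] s' bnd1 by linarith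
      then have "W D k s1 (n + 1) \<le> 0 \<or> W D k s2 (n + 1) \<le> 0" by linarith
      then show "\<exists>s. (\<forall>a. s a \<noteq> Z) \<and> W D k s (n + 1) \<le> 0" using s(1,2) by blast
    next
      assume M2: "D (n + 1, k - (n + 1)) = Z"
      have b: "bnd D k (n + 1) = bnd D k n"
      proof -
        have "(\<exists>m. 0 \<le> m \<and> m < n + 1 \<and> D (m, k - m) \<noteq> Z) \<longleftrightarrow> (\<exists>m. 0 \<le> m \<and> m < n \<and> D (m, k - m) \<noteq> Z)"
        proof
          assume "\<exists>m. 0 \<le> m \<and> m < n + 1 \<and> D (m, k - m) \<noteq> Z"
          then obtain m where "0 \<le> m" "m < n + 1" "D (m, k - m) \<noteq> Z" by blast
          moreover have "m \<noteq> n" using M calculation by auto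
          ultimately show "\<exists>m. 0 \<le> m \<and> m < n \<and> D (m, k - m) \<noteq> Z" by (intro exI[of _ m]) auto
        qed auto
        then show ?thesis unfolding bnd_def by simp
      qed
      show "\<exists>s1 s2. (\<forall>a. s1 a \<noteq> Z) \<and> (\<forall>a. s2 a \<noteq> Z) \<and> s1 (n + 1) = P \<and> s2 (n + 1) = N \<and>
       W D k s1 (n + 1) + W D k s2 (n + 1) \<le> bnd D k (n + 1) - (if n + 1 = k then 1 else 0)"
        apply (rule exI[of _ "s2(n+1 := P)"], rule exI[of _ "s1(n+1 := N)"])
        using L_MM[of n s1 s2, OF n0 nk M M2 s(3) s(4)] s' b s(1,2) by auto
    qed
  next
    case E: False
    then obtain s where s: "\<forall>a. s a \<noteq> Z" "W D k s n \<le> 0" using IH by blast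
    show "(D (n + 1, k - (n + 1)) \<noteq> Z \<longrightarrow> (\<exists>s. (\<forall>a. s a \<noteq> Z) \<and> W D k s (n + 1) \<le> 0)) \<and>
      (D (n + 1, k - (n + 1)) = Z \<longrightarrow> (\<exists>s1 s2. (\<forall>a. s1 a \<noteq> Z) \<and> (\<forall>a. s2 a \<noteq> Z) \<and> s1 (n + 1) = P \<and> s2 (n + 1) = N \<and>
       W D k s1 (n + 1) + W D k s2 (n + 1) \<le> bnd D k (n + 1) - (if n + 1 = k then 1 else 0)))"
    proof (intro conjI impI)
      assume E2: "D (n + 1, k - (n + 1)) \<noteq> Z"
      show "\<exists>s. (\<forall>a. s a \<noteq> Z) \<and> W D k s (n + 1) \<le> 0"
        using L_EE[of n s, OF n0 nk E E2] s by (intro exI[of _ s]) auto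
    next
      assume M2: "D (n + 1, k - (n + 1)) = Z"
      have b: "bnd D k (n + 1) = 0" unfolding bnd_def using E n0 by auto
      have L: "W D k (s(n+1 := P)) (n + 1) + W D k (s(n+1 := N)) (n + 1) \<le> 2 * W D k s n - (if n + 1 = k then 1 else 0)"
        by (rule L_EM[of n, OF n0 nk E M2])
      show "\<exists>s1 s2. (\<forall>a. s1 a \<noteq> Z) \<and> (\<forall>a. s2 a \<noteq> Z) \<and> s1 (n + 1) = P \<and> s2 (n + 1) = N \<and>
       W D k s1 (n + 1) + W D k s2 (n + 1) \<le> bnd D k (n + 1) - (if n + 1 = k then 1 else 0)"
        apply (rule exI[of _ "s(n+1 := P)"], rule exI[of _ "s(n+1 := N)"])
        using L s b by auto
    qed
  qed
qed

lemma final: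
  assumes ex: "\<exists>a. 0 \<le> a \<and> a \<le> k \<and> D (a, k - a) \<noteq> Z"
  shows "\<exists>s. (\<forall>a. s a \<noteq> Z) \<and> W D k s k + xterm D k s (k + 1) \<le> 0"
proof -
  have kk: "int (nat k) = k" using k1 by simp
  have d: "(D (k, 0) \<noteq> Z \<longrightarrow> (\<exists>s. (\<forall>a. s a \<noteq> Z) \<and> W D k s k \<le> 0)) \<and>
  (D (k, 0) = Z \<longrightarrow> (\<exists>s1 s2. (\<forall>a. s1 a \<noteq> Z) \<and> (\<forall>a. s2 a \<noteq> Z) \<and> s1 k = P \<and> s2 k = N \<and>
       W D k s1 k + W D k s2 k \<le> bnd D k k - 1))"
    using dp[of "nat k"] kk by simp
  show ?thesis
  proof (cases "D (k, 0) = Z")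
    case False
    then obtain s where s: "\<forall>a. s a \<noteq> Z" "W D k s k \<le> 0" using d by blast
    then show ?thesis using F_E[OF False, of s] by (intro exI[of _ s]) auto
  next
    case True
    then obtain s1 s2 where s: "\<forall>a. s1 a \<noteq> Z" "\<forall>a. s2 a \<noteq> Z" "s1 k = P" "s2 k = N"
       "W D k s1 k + W D k s2 k \<le> bnd D k k - 1" using d by blast
    obtain a where a: "0 \<le> a" "a \<le> k" "D (a, k - a) \<noteq> Z" using ex by blast
    have "a \<noteq> k" using a True by auto
    then have "a < k" using a by simp
    then have "\<exists>m. 0 \<le> m \<and> m < k \<and> D (m, k - m) \<noteq> Z" using a by blast
    then have "bnd D k k = 0" unfolding bnd_def by simp
    then have "(W D k s1 k + xterm D k s1 (k + 1)) + (W D k s2 k + xterm D k s2 (k + 1)) \<le> 1"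
      using s(5) F_M[of s1 s2, OF True s(3) s(4)] by linarith
    then have "W D k s1 k + xterm D k s1 (k + 1) \<le> 0 \<or> W D k s2 k + xterm D k s2 (k + 1) \<le> 0" by linarith
    then show ?thesis using s(1,2) by blast
  qed
qed

lemma SC_diff: "2 * SC (Dm D k s) - 2 * SC D = real_of_int (W D k s k + xterm D k s (k + 1))"
proof -
  define Dg where "Dg = (\<lambda>a. (a, k - a)) ` {0..k}"
  define X where "X = (\<lambda>a. (a, k + 1 - a)) ` {0..k+1}"
  define C where "C = supp D \<union> Dg"
  define F where "F = cand C \<union> (Dg \<union> X)"
  have finS: "finite (supp D)" using nwt unfolding newton_diagram_def by simp
  have finF: "finite F" unfolding F_def C_def Dg_def X_def using finS by (intro finite_UnI finite_cand) auto
  have sD: "supp (Dm D k s) \<subseteq> C"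
  proof
    fix m assume "m \<in> supp (Dm D k s)"
    then have "Dm D k s m \<noteq> Z" unfolding supp_def by simp
    then have "D m \<noteq> Z \<or> (fst m + snd m = k \<and> 0 \<le> fst m \<and> fst m \<le> k)" unfolding Dm_def by (auto split: if_splits)
    then show "m \<in> C"
    proof
      assume "D m \<noteq> Z" then show ?thesis unfolding C_def supp_def by auto
    next
      assume h: "fst m + snd m = k \<and> 0 \<le> fst m \<and> fst m \<le> k"
      then have "m = (\<lambda>a. (a, k - a)) (fst m)" "fst m \<in> {0..k}" by (cases m; auto)+
      then show ?thesis unfolding C_def Dg_def by blast
    qed
  qed
  have n1: "{a. is_node D a} \<subseteq> F"
    using nodes_cand[of D] cand_mono[of "supp D" C] unfolding F_def C_def by auto
  have n2: "{a. is_node (Dm D k s) a} \<subseteq> F"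
    using nodes_cand[of "Dm D k s"] cand_mono[OF sD] unfolding F_def by auto
  let ?g = "\<lambda>a. real_of_int (w3 (Dm D k s) a - w3 D a)"
  have "2 * SC (Dm D k s) - 2 * SC D = (\<Sum>a\<in>F. ?g a)"
    unfolding SC_sum[OF finF n1] SC_sum[OF finF n2] by (simp add: sum_subtractf)
  also have "\<dots> = (\<Sum>a\<in>Dg \<union> X. ?g a)"
    by (rule sum.mono_neutral_right[OF finF]) (auto simp: F_def Dg_def X_def outside)
  also have "\<dots> = (\<Sum>a\<in>Dg. ?g a) + (\<Sum>a\<in>X. ?g a)"
    by (rule sum.union_disjoint) (auto simp: Dg_def X_def)
  also have "(\<Sum>a\<in>Dg. ?g a) = (\<Sum>a\<in>{0..k}. real_of_int (dterm D k s a))"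
    unfolding Dg_def by (subst sum.reindex) (auto simp: inj_on_def dterm_rel simp del: of_int_diff)
  also have "(\<Sum>a\<in>X. ?g a) = (\<Sum>a\<in>{0..k+1}. real_of_int (xterm D k s a))"
    unfolding X_def by (subst sum.reindex) (auto simp: inj_on_def xterm_rel simp del: of_int_diff)
  also have "{0..k+1} = insert (k+1) {0..k}" using k1 by auto
  finally show ?thesis unfolding W_def by (simp add: sum.distrib)
qed

end


theorem mainTheorem10:
  fixes D :: diagram and k :: int
  assumes "newton_diagram D"
    and "\<forall>a b. a \<ge> 0 \<and> b \<ge> 0 \<and> a + b < k \<longrightarrow> (a, b) \<in> supp D"
    and "\<exists>a b. a \<ge> 0 \<and> b \<ge> 0 \<and> a + b = k \<and> (a, b) \<in> supp D"
  shows "\<exists>D'. newton_diagram D' \<and> supp D \<subseteq> supp D' \<and>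
           (\<forall>m\<in>supp D. D' m = D m) \<and>
           (\<forall>a b. a \<ge> 0 \<and> b \<ge> 0 \<and> a + b = k \<longrightarrow> (a, b) \<in> supp D') \<and>
           (\<forall>m\<in>supp D' - supp D. fst m + snd m = k) \<and>
           SC D' \<le> SC D"
proof -
  obtain a0 b0 where ab: "a0 \<ge> 0" "b0 \<ge> 0" "a0 + b0 = k" "(a0, b0) \<in> supp D" using assms(3) by blast
  show ?thesis
  proof (cases "k = 0")
    case True
    then have "a0 = 0" "b0 = 0" using ab by auto
    then have "\<forall>a b. a \<ge> 0 \<and> b \<ge> 0 \<and> a + b = k \<longrightarrow> (a, b) \<in> supp D"
    proof (intro allI impI)
      fix a b :: int assume "a \<ge> 0 \<and> b \<ge> 0 \<and> a + b = k"
      then have "a = 0" "b = 0" using True by auto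
      then show "(a, b) \<in> supp D" using ab \<open>a0 = 0\<close> \<open>b0 = 0\<close> by simp
    qed
    then show ?thesis using assms(1) by (intro exI[of _ D]) auto
  next
    case False
    then have k1: "k \<ge> 1" using ab by auto
    have ex: "\<exists>a. 0 \<le> a \<and> a \<le> k \<and> D (a, k - a) \<noteq> Z"
      using ab by (intro exI[of _ a0]) (auto simp: supp_def)
    obtain s where s: "\<forall>a. s a \<noteq> Z" "W D k s k + xterm D k s (k + 1) \<le> 0"
      using final[OF assms(1) assms(2) k1 ex] by blast
    have sc: "2 * SC (Dm D k s) - 2 * SC D = real_of_int (W D k s k + xterm D k s (k + 1))"
      by (rule SC_diff[OF assms(1) assms(2) k1])
    have sub: "supp D \<subseteq> supp (Dm D k s)" unfolding supp_def using Dm_keep by auto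
    have nd: "newton_diagram (Dm D k s)"
    proof -
      have f: "finite (supp D)" "supp D \<noteq> {}" and nn: "\<forall>(x,y)\<in>supp D. x \<ge> 0 \<and> y \<ge> 0"
        using assms(1) unfolding newton_diagram_def by auto
      have "finite (supp (Dm D k s))" using f by (intro finite_subset[OF supp_Dm[of D k s]]) auto
      moreover have "supp (Dm D k s) \<noteq> {}" using sub f by auto
      moreover have "\<forall>(x,y)\<in>supp (Dm D k s). x \<ge> 0 \<and> y \<ge> 0" using supp_Dm[of D k s] nn by auto
      ultimately show ?thesis unfolding newton_diagram_def by blast
    qed
    show ?thesis
    proof (intro exI[of _ "Dm D k s"] conjI nd sub)
      show "\<forall>m\<in>supp D. Dm D k s m = D m" using Dm_keep unfolding supp_def by auto
      show "\<forall>a b. a \<ge> 0 \<and> b \<ge> 0 \<and> a + b = k \<longrightarrow> (a, b) \<in> supp (Dm D k s)"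
        using s(1) unfolding supp_def Dm_def by auto
      show "\<forall>m\<in>supp (Dm D k s) - supp D. fst m + snd m = k"
        unfolding supp_def Dm_def by (auto split: if_splits)
      show "SC (Dm D k s) \<le> SC D" using sc s(2) by linarith
    qed
  qed
qed

end
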